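(* Let $\mathbb{S}$ be a metric space with its Borel $\sigma$-field, let $\{\mu_n\}_{n=1,2,\ldots}$ be a sequence of measures on $\mathbb{S}$ converging weakly to a finite measure $\mu$ on $\mathbb{S}$, and let $\{f_n,g_n\}_{n=1,2,\ldots}$ be measurable $[-\infty,+\infty]$-valued functions on $\mathbb{S}$ such that $|f_n(s)|\le g_n(s)$ for all $n$ and $s\in\mathbb{S}$, and $$\limsup_{n\to\infty}\int_{\mathbb{S}} g_n(s)\,\mu_n(ds)\le\int_{\mathbb{S}}\liminf_{n\to\infty,\,s'\to s} g_n(s')\,\mu(ds)<+\infty.$$ If $\lim_{n\to\infty,\,s'\to s}f_n(s')$ exists for $\mu$-a.e. $s\in\mathbb{S}$, then $$\lim_{n\to\infty}\int_{\mathbb{S}} f_n(s)\,\mu_n(ds)=\int_{\mathbb{S}}\lim_{n\to\infty,\,s'\to s} f_n(s')\,\mu(ds).$$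
   Context: Weak convergence: $\int f\,d\mu_n\to\int f\,d\mu$ for all bounded continuous $f$. Integrals of extended-real functions are $\int f^+-\int f^-$, defined when one of these is finite; all integrals involved are assumed defined. $\liminf_{n\to\infty,s'\to s}g_n(s'):=\sup_{n\ge1,\delta>0}\inf_{m\ge n,\,s'\in B_\delta(s)}g_m(s')$, and $\lim_{n\to\infty,s'\to s}f_n(s')$ exists when this liminf for $f_n$ equals the corresponding $\limsup:=\inf_{n\ge1,\delta>0}\sup_{m\ge n,\,s'\in B_\delta(s)}f_m(s')$; $B_\delta(s)$ is the ball of radius $\delta$ about $s$. *)

theory Defs
  imports "HOL-Analysis.Analysis"
begin

definition eint :: "'a measure \<Rightarrow> ('a \<Rightarrow> ereal) \<Rightarrow> ereal" where
  "eint M f = enn2ereal (\<integral>\<^sup>+ x. e2ennreal (f x) \<partial>M)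
             - enn2ereal (\<integral>\<^sup>+ x. e2ennreal (- f x) \<partial>M)"

definition weak_conv :: "(nat \<Rightarrow> 'a::metric_space measure) \<Rightarrow> 'a measure \<Rightarrow> bool" where
  "weak_conv \<mu>s \<mu> \<longleftrightarrow> (\<forall>f :: 'a \<Rightarrow> real. continuous_on UNIV f \<and> bounded (range f) \<longrightarrow>
      (\<lambda>n. eint (\<mu>s n) (\<lambda>x. ereal (f x))) \<longlonglongrightarrow> eint \<mu> (\<lambda>x. ereal (f x)))"

definition jliminf :: "(nat \<Rightarrow> 'a::metric_space \<Rightarrow> ereal) \<Rightarrow> 'a \<Rightarrow> ereal" where
  "jliminf g s = (SUP n. SUP \<delta>\<in>{0::real<..}. INF m\<in>{n..}. INF s'\<in>ball s \<delta>. g m s')"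

definition jlimsup :: "(nat \<Rightarrow> 'a::metric_space \<Rightarrow> ereal) \<Rightarrow> 'a \<Rightarrow> ereal" where
  "jlimsup g s = (INF n. INF \<delta>\<in>{0::real<..}. SUP m\<in>{n..}. SUP s'\<in>ball s \<delta>. g m s')"

end

theory Submission
  imports Defs
begin

definition lscf :: "('a::metric_space \<Rightarrow> 'b::linorder) \<Rightarrow> bool" where
  "lscf f \<longleftrightarrow> (\<forall>s y. y < f s \<longrightarrow> (\<exists>\<delta>>0. \<forall>s'\<in>ball s \<delta>. y < f s'))"

lemma lscf_env:
  fixes K :: "'a::metric_space set \<Rightarrow> 'b::complete_linorder"
  assumes "\<And>A B. A \<subseteq> B \<Longrightarrow> K B \<le> K A"
  shows "lscf (\<lambda>s. SUP \<delta>\<in>{0::real<..}. K (ball s \<delta>))"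
  unfolding lscf_def
proof (intro allI impI)
  fix s y assume "y < (SUP \<delta>\<in>{0::real<..}. K (ball s \<delta>))"
  then obtain \<delta> where d: "\<delta> > 0" "y < K (ball s \<delta>)" by (auto simp: less_SUP_iff)
  show "\<exists>e>0. \<forall>s'\<in>ball s e. y < (SUP \<delta>\<in>{0::real<..}. K (ball s' \<delta>))"
  proof (intro exI[of _ "\<delta>/2"] conjI ballI)
    fix s' assume "s' \<in> ball s (\<delta>/2)"
    then have "ball s' (\<delta>/2) \<subseteq> ball s \<delta>"
      by (auto simp: ball_def) (smt (verit) dist_commute dist_triangle)
    then have "K (ball s \<delta>) \<le> K (ball s' (\<delta>/2))" by (rule assms)
    also have "\<dots> \<le> (SUP \<delta>\<in>{0::real<..}. K (ball s' \<delta>))" using d by (intro SUP_upper) auto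
    finally show "y < (SUP \<delta>\<in>{0::real<..}. K (ball s' \<delta>))" using d by simp
  qed (use d in auto)
qed

lemma lscf_SUP:
  fixes F :: "'i \<Rightarrow> 'a::metric_space \<Rightarrow> 'b::complete_linorder"
  assumes "\<And>i. lscf (F i)"
  shows "lscf (\<lambda>s. SUP i\<in>I. F i s)"
  unfolding lscf_def
proof (intro allI impI)
  fix s y assume "y < (SUP i\<in>I. F i s)"
  then obtain i where i: "i \<in> I" "y < F i s" by (auto simp: less_SUP_iff)
  then obtain \<delta> where "\<delta>>0" "\<forall>s'\<in>ball s \<delta>. y < F i s'" using assms[of i] unfolding lscf_def by blast
  then show "\<exists>\<delta>>0. \<forall>s'\<in>ball s \<delta>. y < (SUP i\<in>I. F i s')"
    using i by (auto simp: less_SUP_iff)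
qed

lemma lscf_measurable:
  fixes f :: "'a::metric_space \<Rightarrow> 'b::{linorder_topology, second_countable_topology}"
  assumes "lscf f"
  shows "f \<in> borel_measurable borel"
proof (rule borel_measurableI_greater)
  fix y
  have "open {x. y < f x}"
    unfolding open_contains_ball using assms unfolding lscf_def
    by (auto simp: subset_iff) (metis mem_ball)
  then show "{x \<in> space borel. y < f x} \<in> sets borel" by simp
qed

lemma lsc_approx:
  fixes \<psi> :: "'a::metric_space \<Rightarrow> ennreal"
  assumes lsc: "lscf \<psi>"
  obtains \<phi> :: "nat \<Rightarrow> 'a \<Rightarrow> real" where "\<And>k. continuous_on UNIV (\<phi> k)"
    "\<And>k. bounded (range (\<phi> k))" "\<And>k s. 0 \<le> \<phi> k s" "\<And>s. incseq (\<lambda>k. \<phi> k s)"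
    "\<And>s. \<psi> s = (SUP k. ennreal (\<phi> k s))"
proof -
  define a where "a k t = enn2real (min (of_nat k) (\<psi> t))" for k :: nat and t
  define \<phi> where "\<phi> k s = (INF t. a k t + real k * dist s t)" for k s
  have a0: "0 \<le> a k t" for k t by (simp add: a_def)
  have ak: "a k t \<le> real k" for k t
    unfolding a_def by (metis enn2real_mono enn2real_of_nat ennreal_less_top min.cobounded1 of_nat_less_top)
  have amono: "a k t \<le> a (Suc k) t" for k t
    unfolding a_def
  proof (rule enn2real_mono)
    have "(of_nat k :: ennreal) \<le> of_nat (Suc k)" by (rule of_nat_mono) simp
    then show "min (of_nat k) (\<psi> t) \<le> min (of_nat (Suc k)) (\<psi> t)" by (rule min.mono) simp
  qed (simp add: min_less_iff_disj of_nat_less_top)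
  have bdd: "bdd_below (range (\<lambda>t. a k t + real k * dist s t))" for k s
    by (rule bdd_belowI[of _ 0]) (auto intro!: add_nonneg_nonneg a0)
  have phi0: "0 \<le> \<phi> k s" for k s
    unfolding \<phi>_def by (rule cINF_greatest) (auto intro!: add_nonneg_nonneg a0)
  have phia: "\<phi> k s \<le> a k s" for k s
    unfolding \<phi>_def using cINF_lower[OF bdd, of s k s] by simp
  have lip: "\<phi> k s \<le> \<phi> k s' + real k * dist s s'" for k s s'
  proof -
    have "\<phi> k s - real k * dist s s' \<le> \<phi> k s'"
      unfolding \<phi>_def[of k s']
    proof (rule cINF_greatest)
      fix t
      have "\<phi> k s \<le> a k t + real k * dist s t" unfolding \<phi>_def by (rule cINF_lower[OF bdd]) simp
      also have "real k * dist s t \<le> real k * dist s s' + real k * dist s' t"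
        by (metis dist_triangle distrib_left mult_left_mono of_nat_0_le_iff)
      finally show "\<phi> k s - real k * dist s s' \<le> a k t + real k * dist s' t" by simp
    qed simp
    then show ?thesis by simp
  qed
  have cont: "continuous_on UNIV (\<phi> k)" for k
  proof (rule lipschitz_on_continuous_on)
    show "lipschitz_on (real k) UNIV (\<phi> k)"
    proof (rule lipschitz_onI)
      fix x y
      show "dist (\<phi> k x) (\<phi> k y) \<le> real k * dist x y"
        using lip[of k x y] lip[of k y x] by (simp add: dist_real_def dist_commute abs_le_iff)
    qed simp
  qed
  have bnd: "bounded (range (\<phi> k))" for k
    unfolding bounded_real using phi0 phia ak
    by (metis abs_of_nonneg order_trans rangeE)
  have inc: "incseq (\<lambda>k. \<phi> k s)" for s
  proof (rule incseq_SucI)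
    fix k
    show "\<phi> k s \<le> \<phi> (Suc k) s"
      unfolding \<phi>_def[of "Suc k"]
    proof (rule cINF_greatest)
      fix t
      have "\<phi> k s \<le> a k t + real k * dist s t" unfolding \<phi>_def by (rule cINF_lower[OF bdd]) simp
      also have "\<dots> \<le> a (Suc k) t + real (Suc k) * dist s t"
        using amono[of k t] by (intro add_mono mult_right_mono) auto
      finally show "\<phi> k s \<le> a (Suc k) t + real (Suc k) * dist s t" .
    qed simp
  qed
  have lim: "\<psi> s = (SUP k. ennreal (\<phi> k s))" for s
  proof (rule antisym)
    show "(SUP k. ennreal (\<phi> k s)) \<le> \<psi> s"
    proof (rule SUP_least)
      fix k
      have "ennreal (\<phi> k s) \<le> ennreal (a k s)" using phia by (simp add: ennreal_leI)
      also have "\<dots> = min (of_nat k) (\<psi> s)" unfolding a_def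
        by (simp add: min_less_iff_disj of_nat_less_top)
      also have "\<dots> \<le> \<psi> s" by simp
      finally show "ennreal (\<phi> k s) \<le> \<psi> s" .
    qed
    show "\<psi> s \<le> (SUP k. ennreal (\<phi> k s))"
    proof (rule dense_le)
      fix y assume y: "y < \<psi> s"
      then have "y < top" using top.not_eq_extremum by fastforce
      then obtain r where r: "y = ennreal r" "0 \<le> r" using \<open>y < top\<close> by (cases y rule: ennreal_cases) auto
      obtain \<delta> where d: "\<delta> > 0" "\<forall>t\<in>ball s \<delta>. y < \<psi> t" using lsc y unfolding lscf_def by blast
      obtain k :: nat where k: "r + r / \<delta> \<le> real k" using real_arch_simple by blast
      have rd: "0 \<le> r / \<delta>" using r d by simp
      have kr: "r \<le> real k" using k rd by linarith
      have "r / \<delta> \<le> real k" using k r by linarith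
      then have kd: "r \<le> real k * \<delta>" using d by (simp add: pos_divide_le_eq)
      have "r \<le> \<phi> k s"
        unfolding \<phi>_def
      proof (rule cINF_greatest)
        fix t
        show "r \<le> a k t + real k * dist s t"
        proof (cases "dist s t < \<delta>")
          case True
          then have "y < \<psi> t" using d by auto
          have "ennreal r \<le> of_nat k" using kr
            by (simp add: ennreal_of_nat_eq_real_of_nat ennreal_leI)
          moreover have "ennreal r \<le> \<psi> t" using \<open>y < \<psi> t\<close> r by simp
          ultimately have "ennreal r \<le> min (of_nat k) (\<psi> t)" by simp
          then have "enn2real (ennreal r) \<le> a k t" unfolding a_def
            by (rule enn2real_mono) (simp add: min_less_iff_disj of_nat_less_top)
          then have "r \<le> a k t" using r by simp
          moreover have "0 \<le> real k * dist s t" by simp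
          ultimately show ?thesis by linarith
        next
          case False
          then have "real k * \<delta> \<le> real k * dist s t" by (intro mult_left_mono) auto
          then show ?thesis using kd a0[of k t] by linarith
        qed
      qed simp
      then have "y \<le> ennreal (\<phi> k s)" using r by (simp add: ennreal_leI)
      also have "\<dots> \<le> (SUP k. ennreal (\<phi> k s))" by (rule SUP_upper) simp
      finally show "y \<le> (SUP k. ennreal (\<phi> k s))" .
    qed
  qed
  show ?thesis using that[OF cont bnd phi0 inc lim] .
qed

lemma eint_nonneg_real:
  assumes "\<And>x. 0 \<le> h x"
  shows "eint M (\<lambda>x. ereal (h x)) = enn2ereal (\<integral>\<^sup>+x. ennreal (h x) \<partial>M)"
  unfolding eint_def using assms by (simp add: e2ennreal_neg ennreal_neg zero_ennreal.rep_eq)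

lemma weak_conv_lsc:
  fixes \<psi> :: "'a::metric_space \<Rightarrow> ennreal"
  assumes sets: "\<And>n. sets (\<mu>s n) = sets borel" "sets \<mu> = sets borel"
    and wc: "weak_conv \<mu>s \<mu>" and lsc: "lscf \<psi>"
  shows "(\<integral>\<^sup>+x. \<psi> x \<partial>\<mu>) \<le> liminf (\<lambda>m. \<integral>\<^sup>+x. \<psi> x \<partial>\<mu>s m)"
proof -
  obtain \<phi> :: "nat \<Rightarrow> 'a \<Rightarrow> real" where cont: "\<And>k. continuous_on UNIV (\<phi> k)"
    and bnd: "\<And>k. bounded (range (\<phi> k))" and nn: "\<And>k s. 0 \<le> \<phi> k s"
    and inc: "\<And>s. incseq (\<lambda>k. \<phi> k s)" and lim: "\<And>s. \<psi> s = (SUP k. ennreal (\<phi> k s))"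
    using lsc_approx[OF lsc] by blast
  have conv: "(\<lambda>m. \<integral>\<^sup>+x. ennreal (\<phi> k x) \<partial>\<mu>s m) \<longlonglongrightarrow> (\<integral>\<^sup>+x. ennreal (\<phi> k x) \<partial>\<mu>)" for k
  proof -
    have "(\<lambda>m. eint (\<mu>s m) (\<lambda>x. ereal (\<phi> k x))) \<longlonglongrightarrow> eint \<mu> (\<lambda>x. ereal (\<phi> k x))"
      using wc cont bnd unfolding weak_conv_def by blast
    then show ?thesis by (simp add: eint_nonneg_real nn)
  qed
  have meas: "(\<lambda>x. ennreal (\<phi> k x)) \<in> borel_measurable \<mu>" for k
  proof -
    have "\<phi> k \<in> borel_measurable borel" by (rule borel_measurable_continuous_onI[OF cont])
    then have "\<phi> k \<in> borel_measurable \<mu>" unfolding measurable_cong_sets[OF sets(2) refl] .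
    then show ?thesis by measurable
  qed
  have incf: "incseq (\<lambda>k x. ennreal (\<phi> k x))"
    using inc by (auto simp: incseq_def le_fun_def intro!: ennreal_leI)
  have "(\<integral>\<^sup>+x. \<psi> x \<partial>\<mu>) = (\<integral>\<^sup>+x. (SUP k. ennreal (\<phi> k x)) \<partial>\<mu>)" using lim by simp
  also have "\<dots> = (SUP k. \<integral>\<^sup>+x. ennreal (\<phi> k x) \<partial>\<mu>)"
    by (rule nn_integral_monotone_convergence_SUP[OF incf meas])
  also have "\<dots> \<le> liminf (\<lambda>m. \<integral>\<^sup>+x. \<psi> x \<partial>\<mu>s m)"
  proof (rule SUP_least)
    fix k
    have "(\<integral>\<^sup>+x. ennreal (\<phi> k x) \<partial>\<mu>) = liminf (\<lambda>m. \<integral>\<^sup>+x. ennreal (\<phi> k x) \<partial>\<mu>s m)"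
      using lim_imp_Liminf[OF trivial_limit_sequentially conv[of k]] by simp
    also have "\<dots> \<le> liminf (\<lambda>m. \<integral>\<^sup>+x. \<psi> x \<partial>\<mu>s m)"
    proof (rule Liminf_mono, rule always_eventually, rule allI, rule nn_integral_mono)
      fix m x show "ennreal (\<phi> k x) \<le> \<psi> x" unfolding lim[of x] by (rule SUP_upper) simp
    qed
    finally show "(\<integral>\<^sup>+x. ennreal (\<phi> k x) \<partial>\<mu>) \<le> liminf (\<lambda>m. \<integral>\<^sup>+x. \<psi> x \<partial>\<mu>s m)" .
  qed
  finally show ?thesis .
qed

lemma fatou_weak:
  fixes h :: "nat \<Rightarrow> 'a::metric_space \<Rightarrow> ereal"
  assumes sets: "\<And>n. sets (\<mu>s n) = sets borel" "sets \<mu> = sets borel"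
    and wc: "weak_conv \<mu>s \<mu>"
  shows "(\<integral>\<^sup>+x. e2ennreal (jliminf h x) \<partial>\<mu>) \<le> liminf (\<lambda>n. \<integral>\<^sup>+x. e2ennreal (h n x) \<partial>\<mu>s n)"
proof -
  define \<psi> where "\<psi> n s = (SUP \<delta>\<in>{0::real<..}. INF m\<in>{n..}. INF s'\<in>ball s \<delta>. e2ennreal (h m s'))" for n s
  have lsc: "lscf (\<psi> n)" for n
    unfolding \<psi>_def[abs_def]
    by (rule lscf_env) (intro INF_mono' INF_superset_mono; auto)
  have meas: "\<psi> n \<in> borel_measurable \<mu>" for n
    unfolding measurable_cong_sets[OF sets(2) refl] by (rule lscf_measurable[OF lsc])
  have inc: "incseq \<psi>"
  proof (rule incseq_SucI, rule le_funI)
    fix n s show "\<psi> n s \<le> \<psi> (Suc n) s"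
      unfolding \<psi>_def by (intro SUP_mono' INF_superset_mono) auto
  qed
  have below: "\<psi> n s \<le> e2ennreal (h m s)" if "n \<le> m" for n m s
    unfolding \<psi>_def
  proof (rule SUP_least)
    fix \<delta> :: real assume "\<delta> \<in> {0<..}"
    then show "(INF m\<in>{n..}. INF s'\<in>ball s \<delta>. e2ennreal (h m s')) \<le> e2ennreal (h m s)"
      using that by (intro INF_lower2[of m] INF_lower) auto
  qed
  have env: "e2ennreal (jliminf h s) \<le> (SUP n. \<psi> n s)" for s
  proof (rule dense_le)
    fix y assume y: "y < e2ennreal (jliminf h s)"
    have "enn2ereal y < jliminf h s"
    proof (rule ccontr)
      assume "\<not> enn2ereal y < jliminf h s"
      then have "e2ennreal (jliminf h s) \<le> e2ennreal (enn2ereal y)" by (intro e2ennreal_mono) simp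
      then show False using y by simp
    qed
    then obtain n \<delta> where nd: "\<delta> > 0"
      "enn2ereal y < (INF m\<in>{n..}. INF s'\<in>ball s \<delta>. h m s')"
      unfolding jliminf_def by (auto simp: less_SUP_iff)
    have "y \<le> (INF m\<in>{n..}. INF s'\<in>ball s \<delta>. e2ennreal (h m s'))"
    proof (intro INF_greatest)
      fix m s' assume "m \<in> {n..}" "s' \<in> ball s \<delta>"
      then have "enn2ereal y < h m s'" using nd(2) by (meson less_INF_D)
      then have "e2ennreal (enn2ereal y) \<le> e2ennreal (h m s')" by (intro e2ennreal_mono) simp
      then show "y \<le> e2ennreal (h m s')" by simp
    qed
    also have "\<dots> \<le> \<psi> n s" unfolding \<psi>_def using nd by (intro SUP_upper) auto
    also have "\<dots> \<le> (SUP n. \<psi> n s)" by (rule SUP_upper) simp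
    finally show "y \<le> (SUP n. \<psi> n s)" .
  qed
  have "(\<integral>\<^sup>+x. e2ennreal (jliminf h x) \<partial>\<mu>) \<le> (\<integral>\<^sup>+x. (SUP n. \<psi> n x) \<partial>\<mu>)"
    by (intro nn_integral_mono env)
  also have "\<dots> = (SUP n. \<integral>\<^sup>+x. \<psi> n x \<partial>\<mu>)"
    by (rule nn_integral_monotone_convergence_SUP[OF inc meas])
  also have "\<dots> \<le> liminf (\<lambda>n. \<integral>\<^sup>+x. e2ennreal (h n x) \<partial>\<mu>s n)"
  proof (rule SUP_least)
    fix n
    have "(\<integral>\<^sup>+x. \<psi> n x \<partial>\<mu>) \<le> liminf (\<lambda>m. \<integral>\<^sup>+x. \<psi> n x \<partial>\<mu>s m)"
      by (rule weak_conv_lsc[OF sets wc lsc])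
    also have "\<dots> \<le> liminf (\<lambda>m. \<integral>\<^sup>+x. e2ennreal (h m x) \<partial>\<mu>s m)"
    proof (rule Liminf_mono)
      show "\<forall>\<^sub>F m in sequentially. (\<integral>\<^sup>+x. \<psi> n x \<partial>\<mu>s m) \<le> (\<integral>\<^sup>+x. e2ennreal (h m x) \<partial>\<mu>s m)"
        unfolding eventually_sequentially by (auto intro!: nn_integral_mono below)
    qed
    finally show "(\<integral>\<^sup>+x. \<psi> n x \<partial>\<mu>) \<le> liminf (\<lambda>n. \<integral>\<^sup>+x. e2ennreal (h n x) \<partial>\<mu>s n)" .
  qed
  finally show ?thesis .
qed

lemma lscf_jliminf: "lscf (jliminf h)"
  unfolding jliminf_def[abs_def]
  by (intro lscf_SUP lscf_env) (intro INF_mono' INF_superset_mono; auto)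

lemma jliminf_measurable: "jliminf h \<in> borel_measurable borel"
  by (rule lscf_measurable[OF lscf_jliminf])

lemma jliminf_ge:
  assumes "\<And>y. y < c \<Longrightarrow> \<exists>n. \<exists>\<delta>>0. \<forall>m\<ge>n. \<forall>s'\<in>ball s \<delta>. y < h m s'"
  shows "c \<le> jliminf h s"
proof (rule dense_le)
  fix y assume "y < c"
  then obtain n \<delta> where nd: "\<delta> > 0" "\<forall>m\<ge>n. \<forall>s'\<in>ball s \<delta>. y < h m s'" using assms by blast
  have "y \<le> (INF m\<in>{n..}. INF s'\<in>ball s \<delta>. h m s')"
    using nd by (intro INF_greatest) (auto intro: less_imp_le)
  also have "\<dots> \<le> jliminf h s" unfolding jliminf_def using nd
    by (intro SUP_upper2[of n] SUP_upper2[of \<delta>]) auto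
  finally show "y \<le> jliminf h s" .
qed

lemma jliminf_gtD:
  assumes "y < jliminf h s"
  shows "\<exists>n. \<exists>\<delta>>0. \<forall>m\<ge>n. \<forall>s'\<in>ball s \<delta>. y < h m s'"
proof -
  obtain n \<delta> where nd: "\<delta> > 0" "y < (INF m\<in>{n..}. INF s'\<in>ball s \<delta>. h m s')"
    using assms unfolding jliminf_def by (auto simp: less_SUP_iff)
  then show ?thesis by (meson atLeast_iff less_INF_D)
qed

lemma jlimsup_ltD:
  assumes "jlimsup h s < y"
  shows "\<exists>n. \<exists>\<delta>>0. \<forall>m\<ge>n. \<forall>s'\<in>ball s \<delta>. h m s' < y"
proof -
  obtain n \<delta> where nd: "\<delta> > 0" "(SUP m\<in>{n..}. SUP s'\<in>ball s \<delta>. h m s') < y"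
    using assms unfolding jlimsup_def by (auto simp: INF_less_iff)
  then show ?thesis by (meson atLeast_iff SUP_lessD)
qed

lemma pw1:
  fixes x z :: ereal
  assumes "\<bar>x\<bar> \<le> z"
  shows "e2ennreal (z + x) + e2ennreal (- x) = e2ennreal z + e2ennreal x"
proof (cases x)
  case (real b)
  show ?thesis
  proof (cases z)
    case (real a)
    with \<open>x = ereal b\<close> assms have ab: "\<bar>b\<bar> \<le> a" by simp
    show ?thesis
    proof (cases "0 \<le> b")
      case True
      have "ennreal (a + b) = ennreal a + ennreal b" using ab True by (intro ennreal_plus) auto
      then show ?thesis using real \<open>x = ereal b\<close> True
        by (simp add: ennreal_neg)
    next
      case False
      then have "ennreal (a + b) + ennreal (- b) = ennreal (a + b + - b)" using ab
        by (intro ennreal_plus[symmetric]) auto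
      then show ?thesis using real \<open>x = ereal b\<close> False by (simp add: ennreal_neg)
    qed
  next
    case PInf
    then show ?thesis using real by simp
  next
    case MInf
    then show ?thesis using real assms by simp
  qed
next
  case PInf
  then have "z = \<infinity>" using assms by simp
  then show ?thesis using PInf by simp
next
  case MInf
  then have "z = \<infinity>" using assms by simp
  then show ?thesis using MInf by simp
qed
lemma pw2:
  fixes x z :: ereal
  assumes "\<bar>x\<bar> \<le> z"
  shows "e2ennreal (z - x) + e2ennreal x = e2ennreal z + e2ennreal (- x)"
  using pw1[of "- x" z] assms by (simp add: minus_ereal_def)

lemma ereal_add_less: "ereal a < x \<Longrightarrow> ereal b < y \<Longrightarrow> ereal (a + b) < x + y"
  by (cases x; cases y) auto

lemma ereal_diff_less: "ereal a < x \<Longrightarrow> y < ereal b \<Longrightarrow> ereal (a - b) < x - y"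
  by (cases x; cases y) auto

lemma liminf_real_ev:
  fixes A :: "nat \<Rightarrow> ennreal"
  assumes "ennreal c \<le> liminf A" "\<forall>\<^sub>F n in sequentially. A n < top" "d > 0"
  shows "\<forall>\<^sub>F n in sequentially. c - d < enn2real (A n)"
proof (cases "c - d < 0")
  case True
  then have "\<forall>n. c - d < enn2real (A n)" by (metis enn2real_nonneg less_le_trans)
  then show ?thesis by simp
next
  case False
  then have "ennreal (c - d) < ennreal c" using assms(3) by (intro ennreal_lessI) auto
  then have "ennreal (c - d) < liminf A" using assms(1) by (rule less_le_trans)
  then have "\<forall>\<^sub>F n in sequentially. ennreal (c - d) < A n" by (rule less_LiminfD)
  then show ?thesis using assms(2)
  proof eventually_elim
    case (elim n)
    then have "ennreal (c - d) < ennreal (enn2real (A n))" by simp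
    then show ?case using False by (simp add: ennreal_less_iff)
  qed
qed

lemma limsup_real_ev:
  fixes G :: "nat \<Rightarrow> ennreal"
  assumes "limsup (\<lambda>n. enn2ereal (G n)) \<le> ereal gi" "d > 0"
  shows "\<forall>\<^sub>F n in sequentially. G n < top \<and> enn2real (G n) < gi + d"
proof -
  have "limsup (\<lambda>n. enn2ereal (G n)) < ereal (gi + d)" using assms by (auto intro: le_less_trans)
  then have "\<forall>\<^sub>F n in sequentially. enn2ereal (G n) < ereal (gi + d)" by (rule Limsup_lessD)
  then show ?thesis
  proof eventually_elim
    case (elim n)
    show ?case
    proof (cases "G n" rule: ennreal_cases)
      case (real r)
      then show ?thesis using elim by simp
    next
      case top
      then show ?thesis using elim by simp
    qed
  qed
qed

lemma limit_core:
  fixes E :: "nat \<Rightarrow> ereal"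
  assumes E: "\<forall>\<^sub>F n in sequentially. E n = ereal (p n - q n)"
    and a: "\<forall>\<^sub>F n in sequentially. a n = gg n + p n - q n"
    and b: "\<forall>\<^sub>F n in sequentially. b n = gg n + q n - p n"
    and ca: "\<And>d. d > 0 \<Longrightarrow> \<forall>\<^sub>F n in sequentially. gi + l - d < a n"
    and cb: "\<And>d. d > 0 \<Longrightarrow> \<forall>\<^sub>F n in sequentially. gi - l - d < b n"
    and cg: "\<And>d. d > 0 \<Longrightarrow> \<forall>\<^sub>F n in sequentially. gg n < gi + d"
  shows "E \<longlonglongrightarrow> ereal l"
proof (rule order_tendstoI)
  fix y assume "y < ereal l"
  then obtain z where z: "y < ereal z" "ereal z < ereal l" using ereal_dense2 by blast
  define d where "d = (l - z) / 2"
  have d: "d > 0" using z by (simp add: d_def)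
  from E a ca[OF d] cg[OF d] show "\<forall>\<^sub>F n in sequentially. y < E n"
  proof eventually_elim
    case (elim n)
    have "l - z = 2 * d" by (simp add: d_def)
    then have "z < p n - q n" using elim by linarith
    then have "ereal z < ereal (p n - q n)" by simp
    then show ?case using elim(1) z(1) by (metis less_trans)
  qed
next
  fix y assume "ereal l < y"
  then obtain z where z: "ereal l < ereal z" "ereal z < y" using ereal_dense2 by blast
  define d where "d = (z - l) / 2"
  have d: "d > 0" using z by (simp add: d_def)
  from E b cb[OF d] cg[OF d] show "\<forall>\<^sub>F n in sequentially. E n < y"
  proof eventually_elim
    case (elim n)
    have "z - l = 2 * d" by (simp add: d_def)
    then have "p n - q n < z" using elim by linarith
    then have "ereal (p n - q n) < ereal z" by simp
    then show ?case using elim(1) z(2) by (metis less_trans)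
  qed
qed

lemma ereal_le_abs: "(x::ereal) \<le> \<bar>x\<bar>" "- (x::ereal) \<le> \<bar>x\<bar>" "0 \<le> \<bar>x::ereal\<bar>"
  by (cases x; simp)+

lemma enn2ereal_fin: "X < top \<Longrightarrow> enn2ereal X = ereal (enn2real X)"
  by (cases X rule: ennreal_cases) auto

theorem corollary2p10:
  fixes \<mu>s :: "nat \<Rightarrow> 'a::metric_space measure" and \<mu> :: "'a measure"
    and f g :: "nat \<Rightarrow> 'a \<Rightarrow> ereal"
  assumes "\<And>n. sets (\<mu>s n) = sets borel"
    and "sets \<mu> = sets borel"
    and "finite_measure \<mu>"
    and "weak_conv \<mu>s \<mu>"
    and "\<And>n. f n \<in> borel_measurable borel"
    and "\<And>n. g n \<in> borel_measurable borel"
    and "\<And>n s. \<bar>f n s\<bar> \<le> g n s"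
    and "limsup (\<lambda>n. eint (\<mu>s n) (g n)) \<le> eint \<mu> (jliminf g)"
    and "eint \<mu> (jliminf g) < \<infinity>"
    and "AE s in \<mu>. jliminf f s = jlimsup f s"
  shows "(\<lambda>n. eint (\<mu>s n) (f n)) \<longlonglongrightarrow> eint \<mu> (jliminf f)"
proof -
  note sets = assms(1,2)
  note wc = assms(4)
  define G where "G = jliminf g"
  define L where "L = jliminf f"
  define U where "U = jlimsup f"
  define h1 where "h1 n s = g n s + f n s" for n s
  define h2 where "h2 n s = g n s - f n s" for n s
  have [measurable]: "f n \<in> borel_measurable (\<mu>s n)" for n
    unfolding measurable_cong_sets[OF sets(1) refl] by (rule assms(5))
  have [measurable]: "g n \<in> borel_measurable (\<mu>s n)" for n
    unfolding measurable_cong_sets[OF sets(1) refl] by (rule assms(6))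
  have [measurable]: "G \<in> borel_measurable \<mu>"
    unfolding measurable_cong_sets[OF sets(2) refl] G_def by (rule jliminf_measurable)
  have [measurable]: "L \<in> borel_measurable \<mu>"
    unfolding measurable_cong_sets[OF sets(2) refl] L_def by (rule jliminf_measurable)
  have fg: "f n s \<le> g n s" "- f n s \<le> g n s" "0 \<le> g n s" for n s
    using ereal_le_abs[of "f n s"] assms(7)[of n s] by (meson order_trans)+
  have G0: "0 \<le> G s" for s
    unfolding G_def by (rule jliminf_ge) (use fg(3) in \<open>auto intro: less_le_trans intro!: exI[of _ 1]\<close>)
  have LG: "L s \<le> G s" for s
    unfolding G_def
  proof (rule jliminf_ge)
    fix y assume "y < L s"
    then obtain n \<delta> where "\<delta>>0" "\<forall>m\<ge>n. \<forall>s'\<in>ball s \<delta>. y < f m s'"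
      unfolding L_def using jliminf_gtD by blast
    then show "\<exists>n. \<exists>\<delta>>0. \<forall>m\<ge>n. \<forall>s'\<in>ball s \<delta>. y < g m s'"
      using fg(1) by (meson less_le_trans)
  qed
  have UG: "- U s \<le> G s" for s
    unfolding G_def
  proof (rule jliminf_ge)
    fix y assume "y < - U s"
    then have "U s < - y" by (simp add: ereal_less_uminus_reorder)
    then obtain n \<delta> where "\<delta>>0" "\<forall>m\<ge>n. \<forall>s'\<in>ball s \<delta>. f m s' < - y"
      unfolding U_def using jlimsup_ltD by blast
    then have "\<forall>m\<ge>n. \<forall>s'\<in>ball s \<delta>. y < - f m s'"
      by (simp add: ereal_less_uminus_reorder)
    then show "\<exists>n. \<exists>\<delta>>0. \<forall>m\<ge>n. \<forall>s'\<in>ball s \<delta>. y < g m s'"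
      using fg(2) \<open>\<delta>>0\<close> by (meson less_le_trans)
  qed
  define Gint where "Gint = (\<integral>\<^sup>+x. e2ennreal (G x) \<partial>\<mu>)"
  have eintG: "eint \<mu> G = enn2ereal Gint"
    unfolding eint_def Gint_def using G0 by (simp add: e2ennreal_neg zero_ennreal.rep_eq)
  have Gint_fin: "Gint < top"
    using assms(9) unfolding G_def[symmetric] eintG
    by (metis enn2ereal_top less_ereal.simps(2) top.not_eq_extremum)
  have "AE x in \<mu>. e2ennreal (G x) \<noteq> \<infinity>"
    by (rule nn_integral_noteq_infinite) (use Gint_fin in \<open>auto simp: Gint_def\<close>)
  then have good: "AE s in \<mu>. G s \<noteq> \<infinity> \<and> L s = U s"
    using assms(10) unfolding L_def U_def by eventually_elim auto
  have goodreal: "\<exists>a b. G s = ereal a \<and> L s = ereal b \<and> \<bar>b\<bar> \<le> a"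
    if gs: "G s \<noteq> \<infinity>" "L s = U s" for s
  proof -
    obtain a where a: "G s = ereal a" using G0[of s] gs(1) by (cases "G s") auto
    have "L s \<noteq> \<infinity>" using LG[of s] a by auto
    moreover have "L s \<noteq> - \<infinity>" using UG[of s] a gs(2) by auto
    ultimately obtain b where b: "L s = ereal b" by (cases "L s") auto
    have "b \<le> a" "- b \<le> a" using LG[of s] UG[of s] a b gs(2) by auto
    then show ?thesis using a b by auto
  qed
  
  have P1: "G s + L s \<le> jliminf h1 s" if gs: "G s \<noteq> \<infinity>" "L s = U s" for s
  proof -
    obtain a b where ab: "G s = ereal a" "L s = ereal b" "\<bar>b\<bar> \<le> a" using goodreal[OF gs] by blast
    show ?thesis
    proof (rule jliminf_ge)
      fix y assume "y < G s + L s"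
      then obtain z where z: "y < ereal z" "z < a + b" using ab ereal_dense2 by fastforce
      define e where "e = (a + b - z) / 2"
      have lt: "ereal (a - e) < jliminf g s" "ereal (b - e) < jliminf f s"
        using ab z by (auto simp: e_def G_def L_def)
      obtain n1 \<delta>1 where
        d1: "\<delta>1 > 0" "\<forall>m\<ge>n1. \<forall>s'\<in>ball s \<delta>1. ereal (a - e) < g m s'"
        using jliminf_gtD[OF lt(1)] by blast
      obtain n2 \<delta>2 where
        d2: "\<delta>2 > 0" "\<forall>m\<ge>n2. \<forall>s'\<in>ball s \<delta>2. ereal (b - e) < f m s'"
        using jliminf_gtD[OF lt(2)] by blast
      have "\<forall>m\<ge>max n1 n2. \<forall>s'\<in>ball s (min \<delta>1 \<delta>2). y < h1 m s'"
      proof (intro allI impI ballI)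
        fix m s' assume "max n1 n2 \<le> m" "s' \<in> ball s (min \<delta>1 \<delta>2)"
        then have "ereal (a - e + (b - e)) < g m s' + f m s'"
          using d1 d2 by (intro ereal_add_less) auto
        moreover have "a - e + (b - e) = z" by (simp add: e_def)
        ultimately show "y < h1 m s'" using z unfolding h1_def by (metis less_trans)
      qed
      then show "\<exists>n. \<exists>\<delta>>0. \<forall>m\<ge>n. \<forall>s'\<in>ball s \<delta>. y < h1 m s'"
        using d1 d2 by (intro exI[of _ "max n1 n2"] exI[of _ "min \<delta>1 \<delta>2"]) auto
    qed
  qed
  have P2: "G s - L s \<le> jliminf h2 s" if gs: "G s \<noteq> \<infinity>" "L s = U s" for s
  proof -
    obtain a b where ab: "G s = ereal a" "L s = ereal b" "\<bar>b\<bar> \<le> a" using goodreal[OF gs] by blast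
    show ?thesis
    proof (rule jliminf_ge)
      fix y assume "y < G s - L s"
      then obtain z where z: "y < ereal z" "z < a - b" using ab ereal_dense2 by fastforce
      define e where "e = (a - b - z) / 2"
      have lt: "ereal (a - e) < jliminf g s" "jlimsup f s < ereal (b + e)"
        using ab z gs(2) by (auto simp: e_def G_def U_def)
      obtain n1 \<delta>1 where
        d1: "\<delta>1 > 0" "\<forall>m\<ge>n1. \<forall>s'\<in>ball s \<delta>1. ereal (a - e) < g m s'"
        using jliminf_gtD[OF lt(1)] by blast
      obtain n2 \<delta>2 where
        d2: "\<delta>2 > 0" "\<forall>m\<ge>n2. \<forall>s'\<in>ball s \<delta>2. f m s' < ereal (b + e)"
        using jlimsup_ltD[OF lt(2)] by blast
      have "\<forall>m\<ge>max n1 n2. \<forall>s'\<in>ball s (min \<delta>1 \<delta>2). y < h2 m s'"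
      proof (intro allI impI ballI)
        fix m s' assume "max n1 n2 \<le> m" "s' \<in> ball s (min \<delta>1 \<delta>2)"
        then have "ereal (a - e - (b + e)) < g m s' - f m s'"
          using d1 d2 by (intro ereal_diff_less) auto
        moreover have "a - e - (b + e) = z" by (simp add: e_def)
        ultimately show "y < h2 m s'" using z unfolding h2_def by (metis less_trans)
      qed
      then show "\<exists>n. \<exists>\<delta>>0. \<forall>m\<ge>n. \<forall>s'\<in>ball s \<delta>. y < h2 m s'"
        using d1 d2 by (intro exI[of _ "max n1 n2"] exI[of _ "min \<delta>1 \<delta>2"]) auto
    qed
  qed
  
  define Lp where "Lp = (\<integral>\<^sup>+x. e2ennreal (L x) \<partial>\<mu>)"
  define Lm where "Lm = (\<integral>\<^sup>+x. e2ennreal (- L x) \<partial>\<mu>)"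
  have Lp_le: "Lp \<le> Gint" unfolding Lp_def Gint_def
    by (intro nn_integral_mono e2ennreal_mono LG)
  have Lm_le: "Lm \<le> Gint" unfolding Lm_def Gint_def
    by (intro nn_integral_mono_AE) (use good in \<open>eventually_elim, auto intro!: e2ennreal_mono simp: UG\<close>)
  have Lp_fin: "Lp < top" and Lm_fin: "Lm < top"
    using Lp_le Lm_le Gint_fin by (auto intro: le_less_trans)
  define gi where "gi = enn2real Gint"
  define lp where "lp = enn2real Lp"
  define lm where "lm = enn2real Lm"
  define l where "l = lp - lm"
  have eintL: "eint \<mu> (jliminf f) = ereal l"
    unfolding eint_def L_def[symmetric] Lp_def[symmetric] Lm_def[symmetric] l_def lp_def lm_def
    using Lp_fin Lm_fin by (simp add: enn2ereal_fin)
  have eintG': "eint \<mu> (jliminf g) = ereal gi"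
    using eintG Gint_fin unfolding G_def gi_def by (simp add: enn2ereal_fin)
  define X1 where "X1 = (\<integral>\<^sup>+x. e2ennreal (G x + L x) \<partial>\<mu>)"
  define X2 where "X2 = (\<integral>\<^sup>+x. e2ennreal (G x - L x) \<partial>\<mu>)"
  have "X1 + Lm = (\<integral>\<^sup>+x. e2ennreal (G x + L x) + e2ennreal (- L x) \<partial>\<mu>)"
    unfolding X1_def Lm_def by (rule nn_integral_add[symmetric]) measurable
  also have "\<dots> = (\<integral>\<^sup>+x. e2ennreal (G x) + e2ennreal (L x) \<partial>\<mu>)"
  proof (rule nn_integral_cong_AE)
    show "AE x in \<mu>. e2ennreal (G x + L x) + e2ennreal (- L x) = e2ennreal (G x) + e2ennreal (L x)"
      using good
    proof eventually_elim
      case (elim x)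
      then obtain a b where "G x = ereal a" "L x = ereal b" "\<bar>b\<bar> \<le> a" using goodreal by blast
      then show ?case by (intro pw1) auto
    qed
  qed
  also have "\<dots> = Gint + Lp" unfolding Gint_def Lp_def by (rule nn_integral_add) measurable
  finally have X1eq: "X1 + Lm = Gint + Lp" .
  have "X2 + Lp = (\<integral>\<^sup>+x. e2ennreal (G x - L x) + e2ennreal (L x) \<partial>\<mu>)"
    unfolding X2_def Lp_def by (rule nn_integral_add[symmetric]) measurable
  also have "\<dots> = (\<integral>\<^sup>+x. e2ennreal (G x) + e2ennreal (- L x) \<partial>\<mu>)"
  proof (rule nn_integral_cong_AE)
    show "AE x in \<mu>. e2ennreal (G x - L x) + e2ennreal (L x) = e2ennreal (G x) + e2ennreal (- L x)"
      using good
    proof eventually_elim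
      case (elim x)
      then obtain a b where "G x = ereal a" "L x = ereal b" "\<bar>b\<bar> \<le> a" using goodreal by blast
      then show ?case by (intro pw2) auto
    qed
  qed
  also have "\<dots> = Gint + Lm" unfolding Gint_def Lm_def by (rule nn_integral_add) measurable
  finally have X2eq: "X2 + Lp = Gint + Lm" .
  have X1fin: "X1 < top" using X1eq Gint_fin Lp_fin
    by (metis add_top ennreal_add_eq_top top.not_eq_extremum)
  have X2fin: "X2 < top" using X2eq Gint_fin Lm_fin
    by (metis add_top ennreal_add_eq_top top.not_eq_extremum)
  have X1r: "X1 = ennreal (gi + l)"
  proof -
    have "enn2real X1 + lm = gi + lp" using arg_cong[OF X1eq, of enn2real] X1fin Lm_fin Gint_fin Lp_fin
      by (simp add: enn2real_plus gi_def lp_def lm_def)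
    then have "enn2real X1 = gi + l" by (simp add: l_def)
    then show ?thesis using X1fin by (metis ennreal_enn2real)
  qed
  have X2r: "X2 = ennreal (gi - l)"
  proof -
    have "enn2real X2 + lp = gi + lm" using arg_cong[OF X2eq, of enn2real] X2fin Lm_fin Gint_fin Lp_fin
      by (simp add: enn2real_plus gi_def lp_def lm_def)
    then have "enn2real X2 = gi - l" by (simp add: l_def)
    then show ?thesis using X2fin by (metis ennreal_enn2real)
  qed
  
  define Gn where "Gn n = (\<integral>\<^sup>+x. e2ennreal (g n x) \<partial>\<mu>s n)" for n
  define Fp where "Fp n = (\<integral>\<^sup>+x. e2ennreal (f n x) \<partial>\<mu>s n)" for n
  define Fm where "Fm n = (\<integral>\<^sup>+x. e2ennreal (- f n x) \<partial>\<mu>s n)" for n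
  define A where "A n = (\<integral>\<^sup>+x. e2ennreal (h1 n x) \<partial>\<mu>s n)" for n
  define B where "B n = (\<integral>\<^sup>+x. e2ennreal (h2 n x) \<partial>\<mu>s n)" for n
  have Aeq: "A n + Fm n = Gn n + Fp n" for n
  proof -
    have "A n + Fm n = (\<integral>\<^sup>+x. e2ennreal (g n x + f n x) + e2ennreal (- f n x) \<partial>\<mu>s n)"
      unfolding A_def Fm_def h1_def by (rule nn_integral_add[symmetric]) measurable
    also have "\<dots> = (\<integral>\<^sup>+x. e2ennreal (g n x) + e2ennreal (f n x) \<partial>\<mu>s n)"
      by (intro nn_integral_cong pw1 assms(7))
    also have "\<dots> = Gn n + Fp n" unfolding Gn_def Fp_def by (rule nn_integral_add) measurable
    finally show ?thesis .
  qed
  have Beq: "B n + Fp n = Gn n + Fm n" for n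
  proof -
    have "B n + Fp n = (\<integral>\<^sup>+x. e2ennreal (g n x - f n x) + e2ennreal (f n x) \<partial>\<mu>s n)"
      unfolding B_def Fp_def h2_def by (rule nn_integral_add[symmetric]) measurable
    also have "\<dots> = (\<integral>\<^sup>+x. e2ennreal (g n x) + e2ennreal (- f n x) \<partial>\<mu>s n)"
      by (intro nn_integral_cong pw2 assms(7))
    also have "\<dots> = Gn n + Fm n" unfolding Gn_def Fm_def by (rule nn_integral_add) measurable
    finally show ?thesis .
  qed
  have Fp_le: "Fp n \<le> Gn n" for n unfolding Fp_def Gn_def
    by (intro nn_integral_mono e2ennreal_mono fg)
  have Fm_le: "Fm n \<le> Gn n" for n unfolding Fm_def Gn_def
    by (intro nn_integral_mono e2ennreal_mono fg)
  have eintg: "eint (\<mu>s n) (g n) = enn2ereal (Gn n)" for n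
    unfolding eint_def Gn_def using fg(3) by (simp add: e2ennreal_neg zero_ennreal.rep_eq)
  have eintf: "eint (\<mu>s n) (f n) = enn2ereal (Fp n) - enn2ereal (Fm n)" for n
    unfolding eint_def Fp_def Fm_def ..
  have ls: "limsup (\<lambda>n. enn2ereal (Gn n)) \<le> ereal gi"
    using assms(8) unfolding eintg eintG' .
  have cg: "\<forall>\<^sub>F n in sequentially. Gn n < top \<and> enn2real (Gn n) < gi + d" if "d > 0" for d
    by (rule limsup_real_ev[OF ls that])
  have Gfin: "\<forall>\<^sub>F n in sequentially. Gn n < top"
  proof -
    have "\<forall>\<^sub>F n in sequentially. Gn n < top \<and> enn2real (Gn n) < gi + 1" by (rule cg) simp
    then show ?thesis by eventually_elim auto
  qed
  have fins: "\<forall>\<^sub>F n in sequentially. Gn n < top \<and> Fp n < top \<and> Fm n < top \<and> A n < top \<and> B n < top"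
    using Gfin
  proof eventually_elim
    case (elim n)
    have "Fp n < top" "Fm n < top" using elim Fp_le[of n] Fm_le[of n] by (auto intro: le_less_trans)
    moreover have "A n < top"
      using Aeq[of n] elim \<open>Fp n < top\<close> by (metis add_top ennreal_add_eq_top top.not_eq_extremum)
    moreover have "B n < top"
      using Beq[of n] elim \<open>Fm n < top\<close> by (metis add_top ennreal_add_eq_top top.not_eq_extremum)
    ultimately show ?case using elim by simp
  qed
  
  have FA: "ennreal (gi + l) \<le> liminf A"
  proof -
    have "ennreal (gi + l) = X1" using X1r by simp
    also have "\<dots> \<le> (\<integral>\<^sup>+x. e2ennreal (jliminf h1 x) \<partial>\<mu>)"
      unfolding X1_def
      by (intro nn_integral_mono_AE) (use good in \<open>eventually_elim, intro e2ennreal_mono P1, auto\<close>)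
    also have "\<dots> \<le> liminf A" unfolding A_def by (rule fatou_weak[OF sets wc])
    finally show ?thesis .
  qed
  have FB: "ennreal (gi - l) \<le> liminf B"
  proof -
    have "ennreal (gi - l) = X2" using X2r by simp
    also have "\<dots> \<le> (\<integral>\<^sup>+x. e2ennreal (jliminf h2 x) \<partial>\<mu>)"
      unfolding X2_def
      by (intro nn_integral_mono_AE) (use good in \<open>eventually_elim, intro e2ennreal_mono P2, auto\<close>)
    also have "\<dots> \<le> liminf B" unfolding B_def by (rule fatou_weak[OF sets wc])
    finally show ?thesis .
  qed
  have Afin: "\<forall>\<^sub>F n in sequentially. A n < top" using fins by eventually_elim auto
  have Bfin: "\<forall>\<^sub>F n in sequentially. B n < top" using fins by eventually_elim auto
  have "(\<lambda>n. eint (\<mu>s n) (f n)) \<longlonglongrightarrow> ereal l"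
  proof (rule limit_core[where p = "\<lambda>n. enn2real (Fp n)" and q = "\<lambda>n. enn2real (Fm n)"
        and a = "\<lambda>n. enn2real (A n)" and b = "\<lambda>n. enn2real (B n)" and gg = "\<lambda>n. enn2real (Gn n)"
        and gi = gi])
    show "\<forall>\<^sub>F n in sequentially. eint (\<mu>s n) (f n) = ereal (enn2real (Fp n) - enn2real (Fm n))"
      using fins by eventually_elim (simp add: eintf enn2ereal_fin)
    show "\<forall>\<^sub>F n in sequentially. enn2real (A n) = enn2real (Gn n) + enn2real (Fp n) - enn2real (Fm n)"
      using fins
    proof eventually_elim
      case (elim n)
      then show ?case using arg_cong[OF Aeq[of n], of enn2real] by (simp add: enn2real_plus)
    qed
    show "\<forall>\<^sub>F n in sequentially. enn2real (B n) = enn2real (Gn n) + enn2real (Fm n) - enn2real (Fp n)"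
      using fins
    proof eventually_elim
      case (elim n)
      then show ?case using arg_cong[OF Beq[of n], of enn2real] by (simp add: enn2real_plus)
    qed
    show "\<forall>\<^sub>F n in sequentially. gi + l - d < enn2real (A n)" if "d > 0" for d
      by (rule liminf_real_ev[OF FA Afin that])
    show "\<forall>\<^sub>F n in sequentially. gi - l - d < enn2real (B n)" if "d > 0" for d
      by (rule liminf_real_ev[OF FB Bfin that])
    show "\<forall>\<^sub>F n in sequentially. enn2real (Gn n) < gi + d" if "d > 0" for d
      using cg[OF that] by eventually_elim auto
  qed
  then show ?thesis unfolding eintL .
qed

end
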